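(* Let $p(y)$ be a probability distribution on a space $\mathcal{Y}$ and, for each $y\in\mathcal{Y}$, let $p(z\mid y)$ be a probability distribution on a space $\mathcal{Z}$. Let $\phi:\mathcal{Y}\times\mathcal{Z}\to\Phi\subseteq\mathbb{R}^{D_\phi}$ be such that $\gamma(y)=\mathbb{E}_{z\sim p(z\mid y)}[\phi(y,z)]$ exists for (almost) every $y$, and let $f:\mathcal{Y}\times\Phi\to\mathbb{R}^{D_f}$ be such that $y\mapsto f(y,\gamma(y))$ is integrable under $p(y)$. Set $I=\mathbb{E}_{y\sim p(y)}[f(y,\gamma(y))]$. On one probability space, let $y_1,y_2,\dots$ be i.i.d. with law $p(y)$ and, for each $n$, conditionally on $y_n$ let $z_{n,1},z_{n,2},\dots$ be i.i.d. with law $p(z\mid y_n)$ (independently across $n$). For $N,M\in\mathbb{N}$ define $$(\hat\gamma_M)_n=\frac1M\sum_{m=1}^M\phi(y_n,z_{n,m}),\qquad I_{N,M}=\frac1N\sum_{n=1}^N f\big(y_n,(\hat\gamma_M)_n\big),$$ and $(\epsilon_M)_n=\big\|f(y_n,(\hat\gamma_M)_n)-f(y_n,\gamma(y_n))\big\|$. If $\mathbb{E}[(\epsilon_M)_1]\to0$ as $M\to\infty$, then there exists a function $\tau:\mathbb{N}\to\mathbb{N}$ such that $I_{\tau(M),M}\to I$ almost surely as $M\to\infty$.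
   Context: This is the nested Monte Carlo (NMC) estimator: an outer Monte Carlo average over $y$ of $f$ evaluated at an inner Monte Carlo estimate of the conditional expectation $\gamma(y)$. Note that for fixed $M$ the variables $(\epsilon_M)_n$, $n\in\mathbb{N}$, are i.i.d. *)

theory Defs
  imports "HOL-Probability.Probability"
begin

definition nmc_row_law ::
  "'y measure \<Rightarrow> 'z measure \<Rightarrow> ('y \<Rightarrow> 'z measure) \<Rightarrow> ('y \<times> (nat \<Rightarrow> 'z)) measure" where
  "nmc_row_law P Z K =
     P \<bind> (\<lambda>y. distr (PiM UNIV (\<lambda>_. K y)) (P \<Otimes>\<^sub>M PiM UNIV (\<lambda>_. Z)) (\<lambda>zs. (y, zs)))"

definition nmc_gamma :: "('y \<Rightarrow> 'z measure) \<Rightarrow> ('y \<Rightarrow> 'z \<Rightarrow> 'c::euclidean_space) \<Rightarrow> 'y \<Rightarrow> 'c" where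
  "nmc_gamma K phi y = (\<integral>z. phi y z \<partial>K y)"

text \<open>Inner estimate (gamma_hat_M)_n; indices n, m start at 0 (n-th row uses z n 0, ..., z n (M-1)).\<close>
definition gamma_hat ::
  "('y \<Rightarrow> 'z \<Rightarrow> 'c::euclidean_space) \<Rightarrow> (nat \<Rightarrow> 'a \<Rightarrow> 'y) \<Rightarrow> (nat \<Rightarrow> nat \<Rightarrow> 'a \<Rightarrow> 'z)
     \<Rightarrow> nat \<Rightarrow> nat \<Rightarrow> 'a \<Rightarrow> 'c" where
  "gamma_hat phi y z M n \<omega> = (1 / real M) *\<^sub>R (\<Sum>m<M. phi (y n \<omega>) (z n m \<omega>))"

definition nmc_I ::
  "('y \<Rightarrow> 'c \<Rightarrow> 'd::euclidean_space) \<Rightarrow> ('y \<Rightarrow> 'z \<Rightarrow> 'c::euclidean_space) \<Rightarrow> (nat \<Rightarrow> 'a \<Rightarrow> 'y)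
     \<Rightarrow> (nat \<Rightarrow> nat \<Rightarrow> 'a \<Rightarrow> 'z) \<Rightarrow> nat \<Rightarrow> nat \<Rightarrow> 'a \<Rightarrow> 'd" where
  "nmc_I f phi y z N M \<omega> = (1 / real N) *\<^sub>R (\<Sum>n<N. f (y n \<omega>) (gamma_hat phi y z M n \<omega>))"

definition nmc_eps ::
  "('y \<Rightarrow> 'z measure) \<Rightarrow> ('y \<Rightarrow> 'c \<Rightarrow> 'd::euclidean_space) \<Rightarrow> ('y \<Rightarrow> 'z \<Rightarrow> 'c::euclidean_space)
     \<Rightarrow> (nat \<Rightarrow> 'a \<Rightarrow> 'y) \<Rightarrow> (nat \<Rightarrow> nat \<Rightarrow> 'a \<Rightarrow> 'z) \<Rightarrow> nat \<Rightarrow> nat \<Rightarrow> 'a \<Rightarrow> real" where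
  "nmc_eps K f phi y z M n \<omega> =
     norm (f (y n \<omega>) (gamma_hat phi y z M n \<omega>) - f (y n \<omega>) (nmc_gamma K phi (y n \<omega>)))"

end

theory Submission
  imports Defs
begin

lemma (in prob_space) wlln:
  fixes X :: "nat \<Rightarrow> 'a \<Rightarrow> real"
  assumes indep: "indep_vars (\<lambda>_. borel) X UNIV"
    and dist: "\<And>n. distr M borel (X n) = distr M borel (X 0)"
    and int: "integrable M (X 0)"
    and e: "\<epsilon> > 0" and d: "\<delta> > 0"
  shows "eventually (\<lambda>N. prob {\<omega>\<in>space M. \<epsilon> \<le> \<bar>(\<Sum>n<N. X n \<omega>) / real N - expectation (X 0)\<bar>} \<le> \<delta>) sequentially"
proof -
  have rv[measurable]: "\<And>n. X n \<in> borel_measurable M" using indep by (auto simp: indep_vars_def)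
  define tr where "tr T x = max (-T) (min T x)" for T x :: real
  define r where "r T x = x - tr T x" for T x
  have tr_meas[measurable]: "tr T \<in> borel_measurable borel" for T
    unfolding tr_def[abs_def] by measurable
  have r_meas[measurable]: "r T \<in> borel_measurable borel" for T
    unfolding r_def[abs_def] by measurable
  have r_bound: "\<bar>r T x\<bar> \<le> \<bar>x\<bar>" if "T \<ge> 0" for T x
    using that by (auto simp: r_def tr_def)
  have int_eq: "integral\<^sup>L M (\<lambda>\<omega>. h (X n \<omega>)) = integral\<^sup>L M (\<lambda>\<omega>. h (X 0 \<omega>))"
    if [measurable]: "h \<in> borel_measurable borel" for h :: "real \<Rightarrow> real" and n
  proof -
    have "integral\<^sup>L M (\<lambda>\<omega>. h (X n \<omega>)) = integral\<^sup>L (distr M borel (X n)) h"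
      by (rule integral_distr[OF rv that, symmetric])
    also have "\<dots> = integral\<^sup>L (distr M borel (X 0)) h" by (rule arg_cong[where f="\<lambda>N. integral\<^sup>L N h", OF dist])
    also have "\<dots> = integral\<^sup>L M (\<lambda>\<omega>. h (X 0 \<omega>))"
      by (rule integral_distr[OF rv that])
    finally show ?thesis .
  qed
  have intg_eq: "integrable M (\<lambda>\<omega>. h (X n \<omega>)) \<longleftrightarrow> integrable M (\<lambda>\<omega>. h (X 0 \<omega>))"
    if [measurable]: "h \<in> borel_measurable borel" for h :: "real \<Rightarrow> real" and n
  proof -
    have "integrable M (\<lambda>\<omega>. h (X n \<omega>)) \<longleftrightarrow> integrable (distr M borel (X n)) h"
      by (rule integrable_distr_eq[OF rv that, symmetric])
    also have "\<dots> \<longleftrightarrow> integrable (distr M borel (X 0)) h" by (rule arg_cong[where f="\<lambda>N. integrable N h", OF dist])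
    also have "\<dots> \<longleftrightarrow> integrable M (\<lambda>\<omega>. h (X 0 \<omega>))"
      by (rule integrable_distr_eq[OF rv that])
    finally show ?thesis .
  qed
  have intr: "integrable M (\<lambda>\<omega>. \<bar>r T (X n \<omega>)\<bar>)" if "T \<ge> 0" for T n
  proof -
    have "integrable M (\<lambda>\<omega>. \<bar>r T (X 0 \<omega>)\<bar>)"
    proof (rule Bochner_Integration.integrable_bound[OF integrable_abs[OF int]])
      show "(\<lambda>\<omega>. \<bar>r T (X 0 \<omega>)\<bar>) \<in> borel_measurable M" by measurable
      show "AE x in M. norm \<bar>r T (X 0 x)\<bar> \<le> norm \<bar>X 0 x\<bar>"
        using r_bound[OF that] by simp
    qed
    moreover have m: "(\<lambda>x. \<bar>r T x\<bar>) \<in> borel_measurable borel" by measurable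
    ultimately show ?thesis using intg_eq[OF m, of n] by blast
  qed
  define \<eta> where "\<eta> = min (\<epsilon>/3) (\<epsilon> * \<delta> / 6)"
  have \<eta>: "\<eta> > 0" using e d by (simp add: \<eta>_def)
  have lim: "(\<lambda>k. integral\<^sup>L M (\<lambda>\<omega>. \<bar>r (real k) (X 0 \<omega>)\<bar>)) \<longlonglongrightarrow> integral\<^sup>L M (\<lambda>\<omega>. 0::real)"
  proof (rule integral_dominated_convergence[where w="\<lambda>\<omega>. \<bar>X 0 \<omega>\<bar>"])
    show "AE x in M. (\<lambda>i. \<bar>r (real i) (X 0 x)\<bar>) \<longlonglongrightarrow> 0"
    proof (intro AE_I2 tendsto_eventually)
      fix x
      obtain k :: nat where "\<bar>X 0 x\<bar> \<le> real k" using real_arch_simple by blast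
      then show "\<forall>\<^sub>F i in sequentially. \<bar>r (real i) (X 0 x)\<bar> = 0"
        unfolding eventually_sequentially
        by (intro exI[of _ k]) (auto simp: r_def tr_def)
    qed
    show "\<And>i. AE x in M. norm \<bar>r (real i) (X 0 x)\<bar> \<le> \<bar>X 0 x\<bar>"
      using r_bound by auto
  qed (use int in auto)
  then have "eventually (\<lambda>k. integral\<^sup>L M (\<lambda>\<omega>. \<bar>r (real k) (X 0 \<omega>)\<bar>) < \<eta>) sequentially"
    using \<eta> by (simp add: order_tendstoD(2))
  then obtain k where k: "k \<ge> 1" "integral\<^sup>L M (\<lambda>\<omega>. \<bar>r (real k) (X 0 \<omega>)\<bar>) < \<eta>"
    unfolding eventually_sequentially by (metis le_add2 add.commute)
  define T where "T = real k"
  have T: "T > 0" using k by (simp add: T_def)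
  define Er where "Er = integral\<^sup>L M (\<lambda>\<omega>. \<bar>r T (X 0 \<omega>)\<bar>)"
  have Er: "Er < \<eta>" using k by (simp add: Er_def T_def)
  define \<mu> where "\<mu> = expectation (X 0)"
  define \<mu>T where "\<mu>T = expectation (\<lambda>\<omega>. tr T (X 0 \<omega>))"
  have intT: "integrable M (\<lambda>\<omega>. tr T (X 0 \<omega>))"
  proof (rule Bochner_Integration.integrable_bound[OF integrable_abs[OF int]])
    show "(\<lambda>\<omega>. tr T (X 0 \<omega>)) \<in> borel_measurable M" by measurable
    show "AE x in M. norm (tr T (X 0 x)) \<le> norm \<bar>X 0 x\<bar>"
      using T by (simp add: tr_def)
  qed
  have "\<bar>\<mu> - \<mu>T\<bar> = \<bar>expectation (\<lambda>\<omega>. r T (X 0 \<omega>))\<bar>"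
    unfolding \<mu>_def \<mu>T_def r_def using int intT by (simp add: Bochner_Integration.integral_diff)
  also have "\<dots> \<le> Er" unfolding Er_def by (rule integral_abs_bound)
  finally have mu_close: "\<bar>\<mu> - \<mu>T\<bar> < \<epsilon>/3" using Er \<eta>_def by linarith
  define c where "c = 2 * (\<epsilon>/3)\<^sup>2 / (T - (-T))\<^sup>2"
  have c: "c > 0" using e T by (simp add: c_def)
  have ev: "eventually (\<lambda>N. N > 0 \<and> 2 * exp (- c * real N) \<le> \<delta>/2) sequentially"
  proof -
    obtain N0 :: nat where N0: "4 / (c * \<delta>) \<le> real N0" using real_arch_simple by blast
    show ?thesis unfolding eventually_sequentially
    proof (intro exI[of _ "Suc N0"] allI impI conjI)
      fix N assume N: "Suc N0 \<le> N"
      then show "N > 0" by simp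
      have Npos: "real N > 0" using N by simp
      have "exp (c * real N) \<ge> 1 + c * real N" by (rule exp_ge_add_one_self)
      then have "exp (c * real N) \<ge> c * real N" by linarith
      have "c * real N \<ge> 4 / \<delta>"
      proof -
        have "4 / (c * \<delta>) \<le> real N" using N N0 by linarith
        then have "4 / (c * \<delta>) * c \<le> real N * c" using c by (intro mult_right_mono) auto
        moreover have "4 / (c * \<delta>) * c = 4 / \<delta>" using c d by simp
        ultimately show ?thesis by (metis mult.commute)
      qed
      then have ge: "exp (c * real N) \<ge> 4 / \<delta>" using \<open>exp (c * real N) \<ge> c * real N\<close> by linarith
      have "2 * exp (- c * real N) = 2 / exp (c * real N)" by (simp add: exp_minus field_simps)
      also have "\<dots> \<le> 2 / (4 / \<delta>)" using ge d by (intro divide_left_mono) auto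
      also have "\<dots> = \<delta>/2" by simp
      finally show "2 * exp (- c * real N) \<le> \<delta>/2" .
    qed
  qed
  show ?thesis
    using ev
  proof eventually_elim
    case (elim N)
    then have N: "N > 0" and ex: "2 * exp (- c * real N) \<le> \<delta>/2" by auto
    define A where "A = {\<omega>\<in>space M. \<bar>(\<Sum>n\<in>{..<N}. tr T (X n \<omega>)) / real N - \<mu>T\<bar> \<ge> \<epsilon>/3}"
    define B where "B = {\<omega>\<in>space M. (\<Sum>n<N. \<bar>r T (X n \<omega>)\<bar>) / real N \<ge> \<epsilon>/3}"
    have PA: "prob A \<le> \<delta>/2"
    proof -
      interpret H: Hoeffding_ineq_iid M "{..<N}" "\<lambda>n \<omega>. tr T (X n \<omega>)" "\<lambda>\<omega>. tr T (X 0 \<omega>)" "-T" T \<mu>T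
      proof unfold_locales
        show "indep_vars (\<lambda>_. borel) (\<lambda>n \<omega>. tr T (X n \<omega>)) {..<N}"
          by (rule indep_vars_compose2[OF indep_vars_subset[OF indep]]) auto
        show "distr M borel (\<lambda>\<omega>. tr T (X i \<omega>)) = distr M borel (\<lambda>\<omega>. tr T (X 0 \<omega>))" for i
        proof -
          have "distr M borel (\<lambda>\<omega>. tr T (X i \<omega>)) = distr (distr M borel (X i)) borel (tr T)"
            by (subst distr_distr) (auto simp: comp_def)
          also have "\<dots> = distr (distr M borel (X 0)) borel (tr T)" by (rule arg_cong[where f="\<lambda>N. distr N borel (tr T)", OF dist])
          also have "\<dots> = distr M borel (\<lambda>\<omega>. tr T (X 0 \<omega>))"
            by (subst distr_distr) (auto simp: comp_def)
          finally show ?thesis .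
        qed
        show "AE x in M. tr T (X 0 x) \<in> {- T..T}" using T by (auto simp: tr_def)
      qed (auto simp: \<mu>T_def)
      have "prob A \<le> 2 * exp (-2 * real (card {..<N}) * (\<epsilon>/3)\<^sup>2 / (T - - T)\<^sup>2)"
        using H.Hoeffding_ineq_abs_ge'[of "\<epsilon>/3"] e T N unfolding A_def by (simp add: lessThan_empty_iff)
      also have "-2 * real (card {..<N}) * (\<epsilon>/3)\<^sup>2 / (T - - T)\<^sup>2 = - c * real N"
        by (simp add: c_def)
      finally show ?thesis using ex by linarith
    qed
    have PB: "prob B \<le> \<delta>/2"
    proof -
      have ib: "integrable M (\<lambda>\<omega>. (\<Sum>n<N. \<bar>r T (X n \<omega>)\<bar>) / real N)"
        using intr T by auto
      have "prob B \<le> (\<integral>\<omega>. (\<Sum>n<N. \<bar>r T (X n \<omega>)\<bar>) / real N \<partial>M) / (\<epsilon>/3)"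
        unfolding B_def by (rule integral_Markov_inequality_measure[OF ib]) (use e in auto)
      also have "(\<integral>\<omega>. (\<Sum>n<N. \<bar>r T (X n \<omega>)\<bar>) / real N \<partial>M) = Er"
      proof -
        have "(\<integral>\<omega>. (\<Sum>n<N. \<bar>r T (X n \<omega>)\<bar>) / real N \<partial>M) = (\<Sum>n<N. integral\<^sup>L M (\<lambda>\<omega>. \<bar>r T (X n \<omega>)\<bar>)) / real N"
          using intr T by (simp add: Bochner_Integration.integral_sum)
        also have "\<dots> = (\<Sum>n<N. Er) / real N"
          unfolding Er_def by (intro arg_cong2[where f="(/)"] sum.cong refl int_eq) auto
        finally show ?thesis using N by simp
      qed
      also have "Er / (\<epsilon>/3) \<le> \<delta>/2"
      proof -
        have "Er \<le> \<epsilon> * \<delta> / 6" using Er \<eta>_def by linarith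
        then show ?thesis using e by (simp add: field_simps)
      qed
      finally show ?thesis .
    qed
    have sub: "{\<omega>\<in>space M. \<epsilon> \<le> \<bar>(\<Sum>n<N. X n \<omega>) / real N - \<mu>\<bar>} \<subseteq> A \<union> B"
    proof safe
      fix \<omega> assume \<omega>: "\<omega> \<in> space M" "\<epsilon> \<le> \<bar>(\<Sum>n<N. X n \<omega>) / real N - \<mu>\<bar>" "\<omega> \<notin> B"
      have split: "(\<Sum>n<N. X n \<omega>) = (\<Sum>n<N. tr T (X n \<omega>)) + (\<Sum>n<N. r T (X n \<omega>))"
        by (simp add: r_def sum.distrib[symmetric])
      have "\<bar>(\<Sum>n<N. r T (X n \<omega>))\<bar> \<le> (\<Sum>n<N. \<bar>r T (X n \<omega>)\<bar>)" by (rule sum_abs)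
      moreover have "(\<Sum>n<N. \<bar>r T (X n \<omega>)\<bar>) / real N < \<epsilon>/3"
        using \<omega>(1,3) by (auto simp: B_def)
      ultimately have "\<bar>(\<Sum>n<N. r T (X n \<omega>))\<bar> / real N < \<epsilon>/3"
        using N by (meson divide_right_mono le_less_trans of_nat_0_le_iff)
      then have "\<bar>(\<Sum>n<N. r T (X n \<omega>)) / real N\<bar> < \<epsilon>/3"
        by (simp add: abs_divide)
      then have "\<bar>(\<Sum>n<N. tr T (X n \<omega>)) / real N - \<mu>T\<bar> \<ge> \<epsilon>/3"
        using \<omega>(2) mu_close unfolding split add_divide_distrib by linarith
      then show "\<omega> \<in> A" using \<omega>(1) by (simp add: A_def)
    qed
    have "prob {\<omega>\<in>space M. \<epsilon> \<le> \<bar>(\<Sum>n<N. X n \<omega>) / real N - \<mu>\<bar>} \<le> prob (A \<union> B)"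
      by (rule finite_measure_mono[OF sub]) (auto simp: A_def B_def)
    also have "\<dots> \<le> prob A + prob B"
      by (rule measure_Un_le) (auto simp: A_def B_def)
    finally show ?case using PA PB unfolding \<mu>_def by linarith
  qed
qed


lemma Q_meas:
  assumes K: "K \<in> P \<rightarrow>\<^sub>M prob_algebra Z"
  shows "(\<lambda>a. PiM (UNIV::nat set) (\<lambda>_. K a)) \<in> P \<rightarrow>\<^sub>M subprob_algebra (PiM (UNIV::nat set) (\<lambda>_. Z))"
proof -
  have Ka: "sets (K a) = sets Z" "prob_space (K a)" if "a \<in> space P" for a
    using measurable_space[OF K that] by (auto simp: space_prob_algebra)
  have spKa: "space (K a) = space Z" if "a \<in> space P" for a
    using sets_eq_imp_space_eq[OF Ka(1)[OF that]] .
  have Ks[measurable]: "K \<in> P \<rightarrow>\<^sub>M subprob_algebra Z" by (rule measurable_prob_algebraD[OF K])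
  show ?thesis
  proof (rule measurable_subprob_algebra_generated[where \<Omega>="space (PiM (UNIV::nat set) (\<lambda>_. Z))" and G="prod_algebra (UNIV::nat set) (\<lambda>_. Z)"])
    show "sets (PiM (UNIV::nat set) (\<lambda>_. Z)) = sigma_sets (space (PiM (UNIV::nat set) (\<lambda>_. Z))) (prod_algebra (UNIV::nat set) (\<lambda>_. Z))"
      by (simp add: sets_PiM space_PiM)
    show "Int_stable (prod_algebra (UNIV::nat set) (\<lambda>_. Z))" by (rule Int_stable_prod_algebra)
    show "prod_algebra (UNIV::nat set) (\<lambda>_. Z) \<subseteq> Pow (space (PiM (UNIV::nat set) (\<lambda>_. Z)))"
      using prod_algebra_sets_into_space by (simp add: space_PiM)
    fix a assume a: "a \<in> space P"
    show "subprob_space (PiM (UNIV::nat set) (\<lambda>_. K a))"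
      by (intro prob_space_imp_subprob_space prob_space_PiM Ka(2)[OF a])
    show "sets (PiM (UNIV::nat set) (\<lambda>_. K a)) = sets (PiM (UNIV::nat set) (\<lambda>_. Z))"
      by (rule sets_PiM_cong) (auto simp: Ka(1)[OF a])
  next
    fix A assume "A \<in> prod_algebra (UNIV::nat set) (\<lambda>_. Z)"
    then obtain J X where J: "finite J" "\<And>j. j \<in> J \<Longrightarrow> X j \<in> sets Z"
      and A: "A = prod_emb UNIV (\<lambda>_. Z) J (\<Pi>\<^sub>E j\<in>J. X j)"
      by (auto simp: prod_algebra_def)
    have "(\<lambda>a. \<Prod>j\<in>J. emeasure (K a) (X j)) \<in> borel_measurable P"
      using J by measurable
    moreover have "emeasure (PiM (UNIV::nat set) (\<lambda>_. K a)) A = (\<Prod>j\<in>J. emeasure (K a) (X j))"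
      if a: "a \<in> space P" for a
    proof -
      have "A = prod_emb UNIV (\<lambda>_. K a) J (\<Pi>\<^sub>E j\<in>J. X j)"
        unfolding A prod_emb_def using spKa[OF a] by simp
      also have "emeasure (PiM (UNIV::nat set) (\<lambda>_. K a)) \<dots> = (\<Prod>j\<in>J. emeasure (K a) (X j))"
        by (rule emeasure_PiM_emb) (use J Ka[OF a] in auto)
      finally show ?thesis by simp
    qed
    ultimately show "(\<lambda>a. emeasure (PiM (UNIV::nat set) (\<lambda>_. K a)) A) \<in> borel_measurable P"
      by (subst measurable_cong) auto
  next
    have "emeasure (PiM (UNIV::nat set) (\<lambda>_. K a)) (space (PiM (UNIV::nat set) (\<lambda>_. Z))) = 1" if a: "a \<in> space P" for a
    proof -
      interpret prob_space "PiM (UNIV::nat set) (\<lambda>_. K a)"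
        using prob_space_PiM[of "UNIV::nat set" "\<lambda>_. K a"] Ka(2)[OF a] by simp
      have "space (PiM (UNIV::nat set) (\<lambda>_. Z)) = space (PiM (UNIV::nat set) (\<lambda>_. K a))"
        by (simp add: space_PiM spKa[OF a])
      then show ?thesis by (metis emeasure_space_1)
    qed
    then show "(\<lambda>a. emeasure (PiM (UNIV::nat set) (\<lambda>_. K a)) (space (PiM (UNIV::nat set) (\<lambda>_. Z)))) \<in> borel_measurable P"
      by (subst measurable_cong[where g="\<lambda>_. 1"]) auto
  qed
qed

lemma row_kernel:
  assumes K: "K \<in> P \<rightarrow>\<^sub>M prob_algebra Z"
  shows "(\<lambda>a. distr (PiM (UNIV::nat set) (\<lambda>_. K a)) (P \<Otimes>\<^sub>M PiM (UNIV::nat set) (\<lambda>_. Z)) (\<lambda>zs. (a, zs)))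
           \<in> P \<rightarrow>\<^sub>M subprob_algebra (P \<Otimes>\<^sub>M PiM (UNIV::nat set) (\<lambda>_. Z))"
proof (rule measurable_distr2[where f="\<lambda>a zs. (a, zs)", OF _ Q_meas[OF K]])
  show "(\<lambda>(a, zs). (a, zs)) \<in> P \<Otimes>\<^sub>M Pi\<^sub>M (UNIV::nat set) (\<lambda>_. Z) \<rightarrow>\<^sub>M P \<Otimes>\<^sub>M Pi\<^sub>M (UNIV::nat set) (\<lambda>_. Z)"
    by (simp add: case_prod_beta')
qed

lemma row_marginal:
  assumes K: "K \<in> P \<rightarrow>\<^sub>M prob_algebra Z" and P: "prob_space P"
  shows "distr (P \<bind> (\<lambda>a. distr (PiM (UNIV::nat set) (\<lambda>_. K a)) (P \<Otimes>\<^sub>M PiM (UNIV::nat set) (\<lambda>_. Z)) (\<lambda>zs. (a, zs)))) P fst = P"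
proof -
  have ne: "space P \<noteq> {}" using P prob_space.not_empty by blast
  have "distr (P \<bind> (\<lambda>a. distr (PiM (UNIV::nat set) (\<lambda>_. K a)) (P \<Otimes>\<^sub>M PiM (UNIV::nat set) (\<lambda>_. Z)) (\<lambda>zs. (a, zs)))) P fst
      = P \<bind> (\<lambda>a. distr (distr (PiM (UNIV::nat set) (\<lambda>_. K a)) (P \<Otimes>\<^sub>M PiM (UNIV::nat set) (\<lambda>_. Z)) (\<lambda>zs. (a, zs))) P fst)"
    apply (rule distr_bind)
      apply (rule row_kernel[OF K])
     apply (rule ne)
    apply (rule measurable_fst)
    done
  also have "\<dots> = P \<bind> return P"
  proof (rule bind_cong[OF refl])
    fix a assume a: "a \<in> space P"
    have Ka: "sets (K a) = sets Z" "prob_space (K a)"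
      using measurable_space[OF K a] by (auto simp: space_prob_algebra)
    interpret Q: prob_space "PiM (UNIV::nat set) (\<lambda>_. K a)"
      using prob_space_PiM[of "UNIV::nat set" "\<lambda>_. K a"] Ka(2) by simp
    have m: "(\<lambda>zs. (a, zs)) \<in> PiM (UNIV::nat set) (\<lambda>_. K a) \<rightarrow>\<^sub>M P \<Otimes>\<^sub>M PiM (UNIV::nat set) (\<lambda>_. Z)"
    proof -
      have "sets (PiM (UNIV::nat set) (\<lambda>_. K a)) = sets (PiM (UNIV::nat set) (\<lambda>_. Z))"
        by (rule sets_PiM_cong) (auto simp: Ka)
      then show ?thesis using a by (simp cong: measurable_cong_sets)
    qed
    have "distr (distr (PiM (UNIV::nat set) (\<lambda>_. K a)) (P \<Otimes>\<^sub>M PiM (UNIV::nat set) (\<lambda>_. Z)) (\<lambda>zs. (a, zs))) P fst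
        = distr (PiM (UNIV::nat set) (\<lambda>_. K a)) P (fst \<circ> (\<lambda>zs. (a, zs)))"
      by (rule distr_distr[OF measurable_fst m])
    also have "\<dots> = distr (PiM (UNIV::nat set) (\<lambda>_. K a)) P (\<lambda>_. a)" by (simp add: comp_def)
    also have "\<dots> = return P a" using a by simp
    finally show "distr (distr (PiM (UNIV::nat set) (\<lambda>_. K a)) (P \<Otimes>\<^sub>M PiM (UNIV::nat set) (\<lambda>_. Z)) (\<lambda>zs. (a, zs))) P fst = return P a" .
  qed
  also have "\<dots> = P" by (rule bind_return'') simp
  finally show ?thesis .
qed



theorem theorem1:
  fixes \<Omega> :: "'a measure" and P :: "'y measure" and Z :: "'z measure"
    and K :: "'y \<Rightarrow> 'z measure"
    and phi :: "'y \<Rightarrow> 'z \<Rightarrow> 'c::euclidean_space"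
    and f :: "'y \<Rightarrow> 'c \<Rightarrow> 'd::euclidean_space"
    and y :: "nat \<Rightarrow> 'a \<Rightarrow> 'y" and z :: "nat \<Rightarrow> nat \<Rightarrow> 'a \<Rightarrow> 'z"
  assumes "prob_space \<Omega>"
    and "prob_space P"
    and K_kernel: "K \<in> P \<rightarrow>\<^sub>M prob_algebra Z"
    and phi_meas: "(\<lambda>(a, b). phi a b) \<in> borel_measurable (P \<Otimes>\<^sub>M Z)"
    and f_meas: "(\<lambda>(a, b). f a b) \<in> borel_measurable (P \<Otimes>\<^sub>M borel)"
    and gamma_exists: "AE a in P. integrable (K a) (phi a)"
    and f_integrable: "integrable P (\<lambda>a. f a (nmc_gamma K phi a))"
    and rows_indep: "prob_space.indep_vars \<Omega> (\<lambda>_. P \<Otimes>\<^sub>M PiM UNIV (\<lambda>_. Z))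
                       (\<lambda>n \<omega>. (y n \<omega>, \<lambda>m. z n m \<omega>)) UNIV"
    and rows_law: "\<And>n. distr \<Omega> (P \<Otimes>\<^sub>M PiM UNIV (\<lambda>_. Z)) (\<lambda>\<omega>. (y n \<omega>, \<lambda>m. z n m \<omega>))
                        = nmc_row_law P Z K"
    and eps_to_0: "(\<lambda>M. \<integral>\<^sup>+ \<omega>. ennreal (nmc_eps K f phi y z M 0 \<omega>) \<partial>\<Omega>) \<longlonglongrightarrow> 0"
  shows "\<exists>\<tau> :: nat \<Rightarrow> nat. AE \<omega> in \<Omega>.
           (\<lambda>M. nmc_I f phi y z (\<tau> M) M \<omega>) \<longlonglongrightarrow> (\<integral>a. f a (nmc_gamma K phi a) \<partial>P)"
proof -
  interpret \<Omega>: prob_space \<Omega> by fact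
  define S where "S = P \<Otimes>\<^sub>M PiM (UNIV::nat set) (\<lambda>_. Z)"
  define row where "row n \<omega> = (y n \<omega>, \<lambda>m. z n m \<omega>)" for n \<omega>
  have indep: "\<Omega>.indep_vars (\<lambda>_. S) row UNIV"
    using rows_indep unfolding S_def row_def[abs_def] .
  have law: "distr \<Omega> S (row n) = nmc_row_law P Z K" for n
    using rows_law[of n] unfolding S_def row_def[abs_def] .
  have row_m[measurable]: "row n \<in> \<Omega> \<rightarrow>\<^sub>M S" for n
    using indep by (auto simp: \<Omega>.indep_vars_def)
  have y_m[measurable]: "y n \<in> \<Omega> \<rightarrow>\<^sub>M P" for n
  proof -
    have "(\<lambda>\<omega>. fst (row n \<omega>)) \<in> \<Omega> \<rightarrow>\<^sub>M P"
      using row_m[of n] unfolding S_def by measurable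
    then show ?thesis by (simp add: row_def)
  qed
  define g where "g a = f a (nmc_gamma K phi a)" for a
  have g_m[measurable]: "g \<in> borel_measurable P"
    using f_integrable unfolding g_def[abs_def] by auto
  define I where "I = (\<integral>a. g a \<partial>P)"
  have lawP: "distr \<Omega> P (y n) = P" for n
  proof -
    have "distr \<Omega> P (y n) = distr \<Omega> P (fst \<circ> row n)" by (simp add: row_def comp_def)
    also have "\<dots> = distr (distr \<Omega> S (row n)) P fst"
    proof (rule distr_distr[symmetric])
      show "fst \<in> S \<rightarrow>\<^sub>M P" unfolding S_def by (rule measurable_fst)
    qed (rule row_m)
    also have "\<dots> = P" unfolding law unfolding nmc_row_law_def S_def
      by (rule row_marginal[OF K_kernel \<open>prob_space P\<close>])
    finally show ?thesis .
  qed
  have iid: "\<Omega>.indep_vars (\<lambda>_. borel) (\<lambda>n \<omega>. h (row n \<omega>)) UNIV"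
       "distr \<Omega> borel (\<lambda>\<omega>. h (row n \<omega>)) = distr \<Omega> borel (\<lambda>\<omega>. h (row 0 \<omega>))"
    if h[measurable]: "h \<in> borel_measurable S" for h :: "_ \<Rightarrow> real" and n
  proof -
    show "\<Omega>.indep_vars (\<lambda>_. borel) (\<lambda>n \<omega>. h (row n \<omega>)) UNIV"
      by (rule \<Omega>.indep_vars_compose2[OF indep]) simp
    have "distr \<Omega> borel (\<lambda>\<omega>. h (row n \<omega>)) = distr (distr \<Omega> S (row n)) borel h"
      by (subst distr_distr) (auto simp: comp_def)
    also have "\<dots> = distr (nmc_row_law P Z K) borel h"
      by (rule arg_cong[where f="\<lambda>N. distr N borel h", OF law])
    also have "\<dots> = distr (distr \<Omega> S (row 0)) borel h"
      by (rule arg_cong[where f="\<lambda>N. distr N borel h", OF law[symmetric]])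
    also have "\<dots> = distr \<Omega> borel (\<lambda>\<omega>. h (row 0 \<omega>))"
      by (subst distr_distr) (auto simp: comp_def)
    finally show "distr \<Omega> borel (\<lambda>\<omega>. h (row n \<omega>)) = distr \<Omega> borel (\<lambda>\<omega>. h (row 0 \<omega>))" .
  qed

  define hX where "hX b = (\<lambda>(a::'y, zs::nat \<Rightarrow> 'z). g a \<bullet> b)" for b :: 'd
  have hX_m[measurable]: "hX b \<in> borel_measurable S" for b
    unfolding hX_def S_def by measurable
  note [measurable] = phi_meas f_meas
  define hE where "hE M = (\<lambda>(a::'y, zs::nat \<Rightarrow> 'z). norm (f a ((1 / real M) *\<^sub>R (\<Sum>m<M. phi a (zs m))) - g a))" for M
  have hE_m[measurable]: "hE M \<in> borel_measurable S" for M
    unfolding hE_def S_def by measurable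
  have hE_nn: "hE M x \<ge> 0" for M x by (simp add: hE_def split: prod.split)
  have eps_eq: "nmc_eps K f phi y z M n \<omega> = hE M (row n \<omega>)" for M n \<omega>
    by (simp add: nmc_eps_def gamma_hat_def hE_def row_def g_def)
  have gX_eq: "g (y n \<omega>) \<bullet> b = hX b (row n \<omega>)" for n \<omega> b
    by (simp add: hX_def row_def)
  have intP: "integrable P g" using f_integrable unfolding g_def[abs_def] .
  have intg: "integrable \<Omega> (\<lambda>\<omega>. g (y 0 \<omega>))"
    using integrable_distr_eq[OF y_m g_m, of 0] intP by (simp add: lawP)
  have intgI: "(\<integral>\<omega>. g (y 0 \<omega>) \<partial>\<Omega>) = I"
    using integral_distr[OF y_m g_m, of 0] by (simp add: lawP I_def)
  have intX: "integrable \<Omega> (\<lambda>\<omega>. hX b (row 0 \<omega>))" for b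
    using integrable_inner_left[OF intg, of b] by (simp add: gX_eq)
  have EX: "\<Omega>.expectation (\<lambda>\<omega>. hX b (row 0 \<omega>)) = I \<bullet> b" for b
    using integral_inner_left[of b \<Omega> "\<lambda>\<omega>. g (y 0 \<omega>)"] intg intgI by (simp add: gX_eq)
  define nnI where "nnI M = (\<integral>\<^sup>+ \<omega>. ennreal (hE M (row 0 \<omega>)) \<partial>\<Omega>)" for M
  have nnI_lim: "nnI \<longlonglongrightarrow> 0"
    using eps_to_0 unfolding nnI_def[abs_def] eps_eq .
  have "eventually (\<lambda>M. nnI M < 1) sequentially"
    using order_tendstoD(2)[OF nnI_lim] by simp
  then obtain M0 where M0: "\<And>M. M \<ge> M0 \<Longrightarrow> nnI M < 1"
    unfolding eventually_sequentially by blast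
  define e where "e M = \<Omega>.expectation (\<lambda>\<omega>. hE M (row 0 \<omega>))" for M
  have intE: "integrable \<Omega> (\<lambda>\<omega>. hE M (row 0 \<omega>))" if "M \<ge> M0" for M
  proof (rule integrableI_bounded)
    show "(\<lambda>\<omega>. hE M (row 0 \<omega>)) \<in> borel_measurable \<Omega>" by measurable
    have "(\<integral>\<^sup>+ \<omega>. ennreal (norm (hE M (row 0 \<omega>))) \<partial>\<Omega>) = nnI M"
      unfolding nnI_def by (intro nn_integral_cong) (simp add: hE_nn)
    also have "\<dots> < \<infinity>"
    proof -
      have "nnI M < 1" by (rule M0[OF that])
      also have "(1::ennreal) < \<infinity>" by simp
      finally show ?thesis .
    qed
    finally show "(\<integral>\<^sup>+ \<omega>. ennreal (norm (hE M (row 0 \<omega>))) \<partial>\<Omega>) < \<infinity>" .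
  qed
  have e_nn: "e M \<ge> 0" for M
    unfolding e_def by (rule integral_nonneg_AE) (simp add: hE_nn)
  have "eventually (\<lambda>M. ennreal (e M) = nnI M) sequentially"
    unfolding eventually_sequentially
  proof (intro exI[of _ M0] allI impI)
    fix M assume "M0 \<le> M"
    then show "ennreal (e M) = nnI M"
      unfolding e_def nnI_def
      by (rule nn_integral_eq_integral[OF intE, symmetric]) (simp_all add: hE_nn)
  qed
  then have "(\<lambda>M. ennreal (e M)) \<longlonglongrightarrow> ennreal 0"
    using nnI_lim by (simp add: tendsto_cong)
  then have e_lim: "e \<longlonglongrightarrow> 0"
    by (rule tendsto_ennrealD) (auto simp: e_nn)

  define dX where "dX b N \<omega> = \<bar>(\<Sum>n<N. hX b (row n \<omega>)) / real N - I \<bullet> b\<bar>" for b N \<omega>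
  define dE where "dE M N \<omega> = \<bar>(\<Sum>n<N. hE M (row n \<omega>)) / real N - e M\<bar>" for M N \<omega>
  have dX_m[measurable]: "dX b N \<in> borel_measurable \<Omega>" for b N
    unfolding dX_def by measurable
  have dE_m[measurable]: "dE M N \<in> borel_measurable \<Omega>" for M N
    unfolding dE_def by measurable
  define good where "good M N \<longleftrightarrow> 0 < N \<and>
      (\<forall>b\<in>Basis. \<Omega>.prob {\<omega>\<in>space \<Omega>. 1 / real (Suc M) \<le> dX b N \<omega>} \<le> (1/2)^M) \<and>
      (M0 \<le> M \<longrightarrow> \<Omega>.prob {\<omega>\<in>space \<Omega>. 1 / real (Suc M) \<le> dE M N \<omega>} \<le> (1/2)^M)" for M N
  have ev_good: "eventually (good M) sequentially" for M
  proof -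
    have pos: "(0::real) < 1 / real (Suc M)" "(0::real) < (1/2)^M" by simp_all
    have evX: "\<forall>b\<in>Basis. eventually (\<lambda>N. \<Omega>.prob {\<omega>\<in>space \<Omega>. 1 / real (Suc M) \<le> dX b N \<omega>} \<le> (1/2)^M) sequentially"
    proof
      fix b :: 'd
      show "eventually (\<lambda>N. \<Omega>.prob {\<omega>\<in>space \<Omega>. 1 / real (Suc M) \<le> dX b N \<omega>} \<le> (1/2)^M) sequentially"
        using \<Omega>.wlln[OF iid[OF hX_m[of b]] intX[of b] pos] unfolding EX dX_def .
    qed
    have evE: "eventually (\<lambda>N. M0 \<le> M \<longrightarrow> \<Omega>.prob {\<omega>\<in>space \<Omega>. 1 / real (Suc M) \<le> dE M N \<omega>} \<le> (1/2)^M) sequentially"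
    proof (cases "M0 \<le> M")
      case True
      have "eventually (\<lambda>N. \<Omega>.prob {\<omega>\<in>space \<Omega>. 1 / real (Suc M) \<le> dE M N \<omega>} \<le> (1/2)^M) sequentially"
        using \<Omega>.wlln[OF iid[OF hE_m[of M]] intE[OF True] pos] unfolding e_def[symmetric] dE_def .
      then show ?thesis by (rule eventually_mono) simp
    qed simp
    show ?thesis
      unfolding good_def
      using eventually_ball_finite[OF finite_Basis evX] evE eventually_gt_at_top[of 0]
      by eventually_elim auto
  qed
  define \<tau> where "\<tau> M = (SOME N. good M N)" for M
  have good_\<tau>: "good M (\<tau> M)" for M
  proof -
    obtain N0 where "\<And>N. N \<ge> N0 \<Longrightarrow> good M N"
      using ev_good[of M] unfolding eventually_sequentially by blast
    then have "\<exists>N. good M N" by blast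
    then show ?thesis unfolding \<tau>_def by (rule someI_ex)
  qed
  have geo: "summable (\<lambda>M. (1/2::real)^M)" by (rule summable_geometric) simp
  have AEX: "AE \<omega> in \<Omega>. \<forall>b\<in>Basis. eventually (\<lambda>M. \<omega> \<in> space \<Omega> - {\<omega>\<in>space \<Omega>. 1 / real (Suc M) \<le> dX b (\<tau> M) \<omega>}) sequentially"
  proof (rule AE_finite_allI[OF finite_Basis])
    fix b :: 'd assume b: "b \<in> Basis"
    show "AE \<omega> in \<Omega>. eventually (\<lambda>M. \<omega> \<in> space \<Omega> - {\<omega>\<in>space \<Omega>. 1 / real (Suc M) \<le> dX b (\<tau> M) \<omega>}) sequentially"
    proof (rule borel_cantelli_AE1)
      show "{\<omega>\<in>space \<Omega>. 1 / real (Suc M) \<le> dX b (\<tau> M) \<omega>} \<in> sets \<Omega>" for M by measurable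
      show "emeasure \<Omega> {\<omega>\<in>space \<Omega>. 1 / real (Suc M) \<le> dX b (\<tau> M) \<omega>} < \<infinity>" for M
        by (simp add: \<Omega>.emeasure_finite less_top[symmetric])
      show "summable (\<lambda>M. measure \<Omega> {\<omega>\<in>space \<Omega>. 1 / real (Suc M) \<le> dX b (\<tau> M) \<omega>})"
      proof (rule summable_comparison_test'[OF geo])
        fix M :: nat
        show "norm (measure \<Omega> {\<omega>\<in>space \<Omega>. 1 / real (Suc M) \<le> dX b (\<tau> M) \<omega>}) \<le> (1/2)^M"
          using good_\<tau>[of M] b unfolding good_def by simp
      qed
    qed
  qed
  define B where "B M = (if M0 \<le> M then {\<omega>\<in>space \<Omega>. 1 / real (Suc M) \<le> dE M (\<tau> M) \<omega>} else {})" for M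
  have AEE: "AE \<omega> in \<Omega>. eventually (\<lambda>M. \<omega> \<in> space \<Omega> - B M) sequentially"
  proof (rule borel_cantelli_AE1)
    show "B M \<in> sets \<Omega>" for M unfolding B_def by (cases "M0 \<le> M") simp_all
    show "emeasure \<Omega> (B M) < \<infinity>" for M
      by (simp add: \<Omega>.emeasure_finite less_top[symmetric])
    show "summable (\<lambda>M. measure \<Omega> (B M))"
    proof (rule summable_comparison_test'[OF geo])
      fix M :: nat
      show "norm (measure \<Omega> (B M)) \<le> (1/2)^M"
        using good_\<tau>[of M] unfolding good_def B_def by auto
    qed
  qed
  have lim_bound: "(\<lambda>M. e M + (1 + real DIM('d)) * inverse (real (Suc M))) \<longlonglongrightarrow> 0"
  proof -
    have "(\<lambda>M. (1 + real DIM('d)) * inverse (real (Suc M))) \<longlonglongrightarrow> 0"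
      by (rule tendsto_mult_right_zero[OF LIMSEQ_inverse_real_of_nat])
    from tendsto_add_zero[OF e_lim this] show ?thesis .
  qed
  show ?thesis
  proof (intro exI[of _ \<tau>])
    show "AE \<omega> in \<Omega>. (\<lambda>M. nmc_I f phi y z (\<tau> M) M \<omega>) \<longlonglongrightarrow> (\<integral>a. f a (nmc_gamma K phi a) \<partial>P)"
      using AEX AEE
    proof eventually_elim
      case (elim \<omega>)
      have ev: "eventually (\<lambda>M. M0 \<le> M \<and> (\<forall>b\<in>Basis. dX b (\<tau> M) \<omega> < 1 / real (Suc M)) \<and>
                     dE M (\<tau> M) \<omega> < 1 / real (Suc M)) sequentially"
      proof -
        have "eventually (\<lambda>M. \<forall>b\<in>Basis. \<omega> \<in> space \<Omega> - {\<omega>\<in>space \<Omega>. 1 / real (Suc M) \<le> dX b (\<tau> M) \<omega>}) sequentially"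
          using elim(1) by (rule eventually_ball_finite[OF finite_Basis])
        with elim(2) eventually_ge_at_top[of M0] show ?thesis
          by eventually_elim (auto simp: B_def not_le)
      qed
      have bound: "eventually (\<lambda>M. norm (nmc_I f phi y z (\<tau> M) M \<omega> - I) \<le> e M + (1 + real DIM('d)) * inverse (real (Suc M))) sequentially"
        using ev
      proof eventually_elim
        case (elim M)
        define N where "N = \<tau> M"
        have N: "N > 0" using good_\<tau>[of M] by (simp add: good_def N_def)
        define F where "F n = f (y n \<omega>) (gamma_hat phi y z M n \<omega>)" for n
        define G where "G n = g (y n \<omega>)" for n
        have hEF: "hE M (row n \<omega>) = norm (F n - G n)" for n
          using eps_eq[of M n \<omega>] by (simp add: nmc_eps_def F_def G_def g_def)
        have hXG: "hX b (row n \<omega>) = G n \<bullet> b" for n b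
          using gX_eq by (simp add: G_def)
        have split: "nmc_I f phi y z N M \<omega> - I = (1 / real N) *\<^sub>R (\<Sum>n<N. F n - G n) + ((1 / real N) *\<^sub>R (\<Sum>n<N. G n) - I)"
          by (simp add: nmc_I_def F_def sum_subtractf scaleR_diff_right)
        have n1: "norm ((1 / real N) *\<^sub>R (\<Sum>n<N. F n - G n)) \<le> e M + 1 / real (Suc M)"
        proof -
          have "norm ((1 / real N) *\<^sub>R (\<Sum>n<N. F n - G n)) \<le> (1 / real N) * (\<Sum>n<N. norm (F n - G n))"
            using norm_sum[of "\<lambda>n. F n - G n" "{..<N}"] by (simp add: divide_right_mono)
          also have "\<dots> = (\<Sum>n<N. hE M (row n \<omega>)) / real N" by (simp add: hEF)
          also have "\<dots> \<le> e M + 1 / real (Suc M)"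
            unfolding N_def using elim unfolding dE_def by linarith
          finally show ?thesis .
        qed
        have n2: "norm ((1 / real N) *\<^sub>R (\<Sum>n<N. G n) - I) \<le> real DIM('d) * (1 / real (Suc M))"
        proof -
          have "norm ((1 / real N) *\<^sub>R (\<Sum>n<N. G n) - I) \<le> (\<Sum>b\<in>Basis. \<bar>((1 / real N) *\<^sub>R (\<Sum>n<N. G n) - I) \<bullet> b\<bar>)"
            by (rule norm_le_l1)
          also have "\<dots> = (\<Sum>b\<in>Basis. dX b N \<omega>)"
            by (intro sum.cong refl) (simp add: dX_def hXG inner_diff_left inner_sum_left)
          also have "\<dots> \<le> (\<Sum>b\<in>(Basis::'d set). 1 / real (Suc M))"
            unfolding N_def using elim by (intro sum_mono) auto
          also have "\<dots> = real DIM('d) * (1 / real (Suc M))" by simp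
          finally show ?thesis .
        qed
        have "norm (nmc_I f phi y z N M \<omega> - I) \<le> norm ((1 / real N) *\<^sub>R (\<Sum>n<N. F n - G n)) + norm ((1 / real N) *\<^sub>R (\<Sum>n<N. G n) - I)"
          unfolding split by (rule norm_triangle_ineq)
        also have "\<dots> \<le> e M + (1 + real DIM('d)) * inverse (real (Suc M))"
          using n1 n2 by (simp add: field_simps)
        finally show ?case by (simp add: N_def)
      qed
      have "(\<lambda>M. nmc_I f phi y z (\<tau> M) M \<omega> - I) \<longlonglongrightarrow> 0"
        by (rule Lim_null_comparison[OF bound lim_bound])
      then have "(\<lambda>M. nmc_I f phi y z (\<tau> M) M \<omega>) \<longlonglongrightarrow> I"
        by (simp add: Lim_null[of _ I])
      then show ?case by (simp add: I_def g_def)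
    qed
  qed
qed

end
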